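(* Let $n\ge3$ and let $G\colon[-2,2]\to\mathbb{R}^n$ be defined as in the context. For $T=(T_0,\dots,T_{n-2})\in[1,\infty)^{n-1}$ let $$\mathcal{F}(T):=\Big\{\sum_{r=0}^{n-2}s_rG^{(r)}(t): t\in[-2,2],\ |s_r|\leq T_r\ (0\le r\le n-2)\Big\},$$ for $\sigma>0$ let $\mathcal{F}_\sigma(T)$ be the Euclidean $\sigma$-neighbourhood of $\mathcal{F}(T)$, and let $\mathcal{L}_\sigma(T):=\mathcal{F}_\sigma(T)\cap\mathbb{Z}^n$. Then for all $R\geq T_0,\dots,T_{n-2}\geq\sigma\geq1$, $$\#\mathcal{L}_\sigma(T)\leq C\,R\prod_{r=0}^{n-2}T_r,$$ where $C$ depends only on $\sigma$, $n$ and the curve.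
   Context: Let $\gamma(t)=(t,f(t))$ with $f\colon U\to\mathbb{R}^{n-1}$ smooth on an open set $U\supset[-2,2]$ and $\det[\gamma^{(1)}(t)\ \cdots\ \gamma^{(n)}(t)]\neq0$ for $t\in U$. Let $\mathbf{e}_1(t),\dots,\mathbf{e}_n(t)$ be the Frenet frame, i.e. the orthonormal system obtained by applying Gram–Schmidt to $\gamma^{(1)}(t),\dots,\gamma^{(n)}(t)$. Standing assumption of the paper: the $n$-th component $\mathbf{e}_{n,n}(t)$ of $\mathbf{e}_n(t)$ is nonzero for all $t\in U$. Define $G(t):=\mathbf{e}_n(t)/\mathbf{e}_{n,n}(t)$; $G^{(r)}$ denotes its $r$-th derivative ($G^{(0)}=G$). *)

theory Defs
  imports "HOL-Analysis.Derivative" "Jordan_Normal_Form.Determinant"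
begin

(* Vectors of R^n are represented as functions nat => real, only the
   coordinates 0..n-1 are relevant (coordinate i here = coordinate i+1 of the paper). *)

definition ipn :: "nat \<Rightarrow> (nat \<Rightarrow> real) \<Rightarrow> (nat \<Rightarrow> real) \<Rightarrow> real" where
  "ipn n v w = (\<Sum>i<n. v i * w i)"

definition smooth_on_real :: "real set \<Rightarrow> (real \<Rightarrow> real) \<Rightarrow> bool" where
  "smooth_on_real U g \<longleftrightarrow> (\<forall>k. \<forall>t\<in>U. ((deriv ^^ k) g) differentiable (at t))"

definition gam :: "(nat \<Rightarrow> real \<Rightarrow> real) \<Rightarrow> real \<Rightarrow> nat \<Rightarrow> real" where
  "gam f t i = (if i = 0 then t else f i t)"

definition vder :: "nat \<Rightarrow> (real \<Rightarrow> nat \<Rightarrow> real) \<Rightarrow> real \<Rightarrow> nat \<Rightarrow> real" where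
  "vder k c t i = (deriv ^^ k) (\<lambda>s. c s i) t"

fun gs_list :: "nat \<Rightarrow> (nat \<Rightarrow> nat \<Rightarrow> real) \<Rightarrow> nat \<Rightarrow> (nat \<Rightarrow> real) list" where
  "gs_list n v 0 = []"
| "gs_list n v (Suc k) =
     (let es = gs_list n v k;
          u = (\<lambda>i. v (Suc k) i - (\<Sum>e\<leftarrow>es. ipn n (v (Suc k)) e * e i))
      in es @ [(\<lambda>i. u i / sqrt (ipn n u u))])"

definition frenet :: "nat \<Rightarrow> (nat \<Rightarrow> real \<Rightarrow> real) \<Rightarrow> real \<Rightarrow> nat \<Rightarrow> nat \<Rightarrow> real" where
  "frenet n f t k = gs_list n (\<lambda>j. vder j (gam f) t) n ! (k - 1)"

definition Gfun :: "nat \<Rightarrow> (nat \<Rightarrow> real \<Rightarrow> real) \<Rightarrow> real \<Rightarrow> nat \<Rightarrow> real" where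
  "Gfun n f t i = frenet n f t n i / frenet n f t n (n - 1)"

definition FT :: "nat \<Rightarrow> (nat \<Rightarrow> real \<Rightarrow> real) \<Rightarrow> (nat \<Rightarrow> real) \<Rightarrow> (nat \<Rightarrow> real) set" where
  "FT n f T = {x. \<exists>t\<in>{-2..2}. \<exists>s. (\<forall>r<n-1. \<bar>s r\<bar> \<le> T r) \<and>
                  x = (\<lambda>i. \<Sum>r<n-1. s r * vder r (Gfun n f) t i)}"

(* L_sigma(T) = F_sigma(T) \<inter> Z^n, integer vectors of length n as functions vanishing from n on *)
definition LT :: "nat \<Rightarrow> (nat \<Rightarrow> real \<Rightarrow> real) \<Rightarrow> real \<Rightarrow> (nat \<Rightarrow> real) \<Rightarrow> (nat \<Rightarrow> int) set" where
  "LT n f \<sigma> T = {z. (\<forall>i\<ge>n. z i = 0) \<and>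
       (\<exists>x\<in>FT n f T. sqrt (\<Sum>i<n. (real_of_int (z i) - x i)\<^sup>2) < \<sigma>)}"

end

theory Submission
  imports Defs "HOL-Library.FuncSet"
begin





definition ksm :: "nat \<Rightarrow> real set \<Rightarrow> (real \<Rightarrow> real) \<Rightarrow> bool" where
  "ksm k U g \<longleftrightarrow> (\<forall>j\<le>k. \<forall>t\<in>U. ((deriv ^^ j) g) differentiable (at t))"

lemma ksm_0: "ksm 0 U g \<longleftrightarrow> (\<forall>t\<in>U. g differentiable (at t))"
  by (simp add: ksm_def)

lemma ksm_Suc: "ksm (Suc k) U g \<longleftrightarrow> (\<forall>t\<in>U. g differentiable (at t)) \<and> ksm k U (deriv g)"
proof -
  have sp: "(\<forall>j\<le>Suc k. P j) \<longleftrightarrow> P 0 \<and> (\<forall>j\<le>k. P (Suc j))" for P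
    apply auto
    subgoal for j by (cases j) auto
    done
  have e: "\<And>j. (deriv ^^ Suc j) g = (deriv ^^ j) (deriv g)" by (simp only: funpow_Suc_right o_apply)
  show ?thesis unfolding ksm_def sp[where P="\<lambda>j. \<forall>t\<in>U. (deriv ^^ j) g differentiable (at t)"] e
    by simp
qed

lemma ksm_mono: "ksm k U g \<Longrightarrow> j \<le> k \<Longrightarrow> ksm j U g"
  by (auto simp: ksm_def)

lemma ksm_diffI: "ksm k U g \<Longrightarrow> t \<in> U \<Longrightarrow> g differentiable (at t)"
  by (auto simp: ksm_def dest: spec[of _ 0])

lemma deriv_cong_open: "open U \<Longrightarrow> (\<And>t. t \<in> U \<Longrightarrow> g t = h t) \<Longrightarrow> t \<in> U \<Longrightarrow> deriv g t = deriv h t"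
  by (rule deriv_cong_ev) (auto simp: eventually_nhds)

lemma differentiable_cong_open: "open U \<Longrightarrow> (\<And>t. t \<in> U \<Longrightarrow> g t = h t) \<Longrightarrow> t \<in> U \<Longrightarrow>
   g differentiable (at t) \<Longrightarrow> h differentiable (at t)"
  unfolding differentiable_def using has_derivative_transform_within_open by blast

lemma ksm_cong: "open U \<Longrightarrow> (\<And>t. t \<in> U \<Longrightarrow> g t = h t) \<Longrightarrow> ksm k U g \<Longrightarrow> ksm k U h"
proof (induction k arbitrary: g h)
  case 0 then show ?case by (auto simp: ksm_0 intro: differentiable_cong_open)
next
  case (Suc k)
  have "ksm k U (deriv g)" using Suc.prems(3) by (simp add: ksm_Suc)
  moreover have "\<And>t. t \<in> U \<Longrightarrow> deriv g t = deriv h t" using Suc.prems(1,2) deriv_cong_open by blast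
  ultimately have "ksm k U (deriv h)" using Suc.IH Suc.prems(1) by blast
  moreover have "\<forall>t\<in>U. h differentiable (at t)" using Suc.prems ksm_diffI differentiable_cong_open by metis
  ultimately show ?case by (simp add: ksm_Suc)
qed

lemma ksm_cong2: "open U \<Longrightarrow> ksm k U g \<Longrightarrow> \<forall>t\<in>U. g t = h t \<Longrightarrow> ksm k U h"
  using ksm_cong[of U g h k] by blast

lemma deriv_at_real: "g differentiable (at t) \<Longrightarrow> (g has_real_derivative deriv g t) (at t)"
  using DERIV_deriv_iff_real_differentiable by blast

lemma chain_at:
  fixes \<phi> g :: "real \<Rightarrow> real"
  assumes "\<phi> differentiable (at (g t))" "g differentiable (at t)"
  shows "((\<lambda>x. \<phi> (g x)) has_real_derivative deriv \<phi> (g t) * deriv g t) (at t)"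
  using DERIV_chain2[OF deriv_at_real[OF assms(1)] deriv_at_real[OF assms(2)]] .

lemma chain_diff:
  fixes \<phi> g :: "real \<Rightarrow> real"
  assumes "\<phi> differentiable (at (g t))" "g differentiable (at t)"
  shows "(\<lambda>x. \<phi> (g x)) differentiable (at t)"
  using chain_at[OF assms] real_differentiable_def by blast

lemma diff_mult:
  fixes g h :: "real \<Rightarrow> real"
  assumes "g differentiable (at t)" "h differentiable (at t)"
  shows "(\<lambda>x. g x * h x) differentiable (at t)"
  using DERIV_mult'[OF deriv_at_real[OF assms(1)] deriv_at_real[OF assms(2)]] real_differentiable_def by blast

lemma diff_add:
  fixes g h :: "real \<Rightarrow> real"
  assumes "g differentiable (at t)" "h differentiable (at t)"
  shows "(\<lambda>x. g x + h x) differentiable (at t)"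
  using DERIV_add[OF deriv_at_real[OF assms(1)] deriv_at_real[OF assms(2)]] real_differentiable_def by blast

lemma ksm_const: "ksm k U (\<lambda>_. c)"
proof (induction k arbitrary: c)
  case 0 then show ?case by (simp add: ksm_0)
next
  case (Suc k)
  have "deriv (\<lambda>_. c) = (\<lambda>_. 0)" by (rule ext) simp
  then show ?case using Suc by (simp add: ksm_Suc)
qed

lemma ksm_id: "ksm k U (\<lambda>x. x)"
proof (cases k)
  case 0 then show ?thesis by (simp add: ksm_0)
next
  case (Suc k)
  have "deriv (\<lambda>x. x) = (\<lambda>_. 1)" by (rule ext) simp
  then show ?thesis using Suc by (simp add: ksm_Suc ksm_const ksm_0)
qed

lemma ksm_add: "open U \<Longrightarrow> ksm k U g \<Longrightarrow> ksm k U h \<Longrightarrow> ksm k U (\<lambda>x. g x + h x)"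
proof (induction k arbitrary: g h)
  case 0 then show ?case by (simp add: ksm_0 diff_add)
next
  case (Suc k)
  have "ksm k U (deriv g)" "ksm k U (deriv h)" using Suc.prems by (simp_all add: ksm_Suc)
  note ih = Suc.IH[OF Suc.prems(1) this(1) this(2)]
  have eq: "deriv g x + deriv h x = deriv (\<lambda>x. g x + h x) x" if "x \<in> U" for x
  proof -
    have "g differentiable (at x)" "h differentiable (at x)" using Suc.prems(2,3) that by (simp_all add: ksm_Suc)
    from DERIV_add[OF deriv_at_real[OF this(1)] deriv_at_real[OF this(2)]]
    show ?thesis by (rule DERIV_imp_deriv[symmetric])
  qed
  have "ksm k U (deriv (\<lambda>x. g x + h x))" using ksm_cong2[OF Suc.prems(1) ih] eq by blast
  then show ?case using Suc.prems by (simp add: ksm_Suc diff_add)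
qed

lemma ksm_mult: "open U \<Longrightarrow> ksm k U g \<Longrightarrow> ksm k U h \<Longrightarrow> ksm k U (\<lambda>x. g x * h x)"
proof (induction k arbitrary: g h)
  case 0 then show ?case by (simp add: ksm_0 diff_mult)
next
  case (Suc k)
  have ih: "ksm k U (\<lambda>x. deriv g x * h x + deriv h x * g x)"
  proof -
    have a: "ksm k U (deriv g)" "ksm k U (deriv h)" using Suc.prems by (simp_all add: ksm_Suc)
    have b: "ksm k U g" "ksm k U h" using Suc.prems ksm_mono[of "Suc k" U, OF _ le_SucI[OF order_refl]] by blast+
    show ?thesis by (rule ksm_add[OF Suc.prems(1) Suc.IH[OF Suc.prems(1) a(1) b(2)] Suc.IH[OF Suc.prems(1) a(2) b(1)]])
  qed
  have eq: "deriv g x * h x + deriv h x * g x = deriv (\<lambda>x. g x * h x) x" if "x \<in> U" for x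
  proof -
    have "g differentiable (at x)" "h differentiable (at x)" using Suc.prems(2,3) that by (simp_all add: ksm_Suc)
    from DERIV_mult[OF deriv_at_real[OF this(1)] deriv_at_real[OF this(2)]]
    show ?thesis by (rule DERIV_imp_deriv[symmetric])
  qed
  have "ksm k U (deriv (\<lambda>x. g x * h x))" using ksm_cong2[OF Suc.prems(1) ih] eq by blast
  then show ?case using Suc.prems by (simp add: ksm_Suc diff_mult)
qed

lemma ksm_chain: "open U \<Longrightarrow> open V \<Longrightarrow> ksm k V \<phi> \<Longrightarrow> ksm k U g \<Longrightarrow> (\<And>t. t \<in> U \<Longrightarrow> g t \<in> V) \<Longrightarrow>
   ksm k U (\<lambda>x. \<phi> (g x))"
proof (induction k arbitrary: \<phi> g)
  case 0 then show ?case
    by (simp add: ksm_0 chain_diff)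
next
  case (Suc k)
  have ih: "ksm k U (\<lambda>x. deriv \<phi> (g x) * deriv g x)"
  proof -
    have a: "ksm k V (deriv \<phi>)" "ksm k U (deriv g)" using Suc.prems by (simp_all add: ksm_Suc)
    have b: "ksm k U g" using Suc.prems ksm_mono[of "Suc k" U, OF _ le_SucI[OF order_refl]] by blast
    show ?thesis by (rule ksm_mult[OF Suc.prems(1) Suc.IH[OF Suc.prems(1,2) a(1) b Suc.prems(5)] a(2)])
  qed
  have eq: "deriv \<phi> (g x) * deriv g x = deriv (\<lambda>x. \<phi> (g x)) x" if "x \<in> U" for x
  proof -
    have "\<phi> differentiable (at (g x))" "g differentiable (at x)" using Suc.prems(3,4,5) that by (simp_all add: ksm_Suc)
    from chain_at[OF this] show ?thesis by (intro DERIV_imp_deriv[symmetric])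
  qed
  have "ksm k U (deriv (\<lambda>x. \<phi> (g x)))" using ksm_cong2[OF Suc.prems(1) ih] eq by blast
  moreover have "\<forall>t\<in>U. (\<lambda>x. \<phi> (g x)) differentiable (at t)"
    using Suc.prems(3,4,5) by (simp add: ksm_Suc chain_diff)
  ultimately show ?case by (simp add: ksm_Suc)
qed

lemma open_nonzero: "open {x::real. x \<noteq> 0}"
proof -
  have "{x::real. x \<noteq> 0} = - {0}" by auto
  then show ?thesis using open_Compl[OF closed_singleton[of "0::real"]] by simp
qed

lemma inv_diff: "(t::real) \<noteq> 0 \<Longrightarrow> inverse differentiable (at t)"
  unfolding real_differentiable_def by (rule exI, rule DERIV_inverse)

lemma sqrt_diff: "(t::real) > 0 \<Longrightarrow> sqrt differentiable (at t)"
  unfolding real_differentiable_def by (rule exI, rule DERIV_real_sqrt)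

lemma ksm_inverse: "ksm k {x::real. x \<noteq> 0} inverse"
proof (induction k)
  case 0 then show ?case by (simp add: ksm_0 inv_diff)
next
  case (Suc k)
  have ih: "ksm k {x. x \<noteq> 0} (\<lambda>x::real. (- 1) * (inverse x * inverse x))"
    using Suc by (intro ksm_mult ksm_const open_nonzero)
  have eq: "(- 1) * (inverse x * inverse x) = deriv inverse x" if "x \<in> {x. x \<noteq> 0}" for x :: real
  proof -
    have "deriv inverse x = - (inverse x ^ Suc (Suc 0))"
      using that DERIV_imp_deriv[OF DERIV_inverse[of x UNIV]] by simp
    moreover have "(- 1) * (inverse x * inverse x) = - (inverse x ^ Suc (Suc 0))" by (simp only: power_Suc power_0)
    ultimately show ?thesis by simp
  qed
  have "ksm k {x. x \<noteq> 0} (deriv inverse)" using ksm_cong2[OF open_nonzero ih] eq by blast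
  then show ?case by (simp add: ksm_Suc inv_diff)
qed

lemma ksm_sqrt: "ksm k {0<..} sqrt"
proof (induction k)
  case 0 then show ?case by (simp add: ksm_0 sqrt_diff)
next
  case (Suc k)
  have ih: "ksm k {0<..} (\<lambda>x. inverse (sqrt x) * (1/2))"
    by (rule ksm_mult[OF open_greaterThan _ ksm_const], rule ksm_chain[OF open_greaterThan open_nonzero ksm_inverse Suc]) simp
  have eq: "inverse (sqrt x) * (1/2) = deriv sqrt x" if "x \<in> {0<..}" for x
  proof -
    have "deriv sqrt x = inverse (sqrt x) / 2"
      using that DERIV_imp_deriv[OF DERIV_real_sqrt[of x]] by simp
    then show ?thesis by simp
  qed
  have "ksm k {0<..} (deriv sqrt)" using ksm_cong2[OF open_greaterThan ih] eq by blast
  then show ?case by (simp add: ksm_Suc sqrt_diff)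
qed



lemma det_indep:
  fixes v :: "nat \<Rightarrow> nat \<Rightarrow> real"
  assumes det: "det (mat n n (\<lambda>(i, j). v (j + 1) i)) \<noteq> 0" and kn: "k < n"
  shows "\<exists>i<n. v (Suc k) i \<noteq> (\<Sum>j<k. d j * v (Suc j) i)"
proof (rule ccontr)
  assume "\<not> ?thesis"
  then have H: "\<And>i. i < n \<Longrightarrow> v (Suc k) i = (\<Sum>j<k. d j * v (Suc j) i)" by auto
  define A where "A = mat n n (\<lambda>(i, j). v (j + 1) i)"
  define w :: "real vec" where "w = vec n (\<lambda>j. if j < k then - d j else if j = k then 1 else 0)"
  have A: "A \<in> carrier_mat n n" unfolding A_def by simp
  have w: "w \<in> carrier_vec n" unfolding w_def by simp
  have wnz: "w \<noteq> 0\<^sub>v n"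
  proof
    assume "w = 0\<^sub>v n"
    then have "w $ k = 0\<^sub>v n $ k" by simp
    then show False using kn unfolding w_def by simp
  qed
  have "A *\<^sub>v w = 0\<^sub>v n"
  proof (rule eq_vecI)
    show "dim_vec (A *\<^sub>v w) = dim_vec (0\<^sub>v n)" using A by simp
    fix i assume "i < dim_vec (0\<^sub>v n)"
    then have i: "i < n" by simp
    define F where "F j = (if j < k then - d j * v (Suc j) i else if j = k then v (Suc k) i else 0)" for j
    have "(A *\<^sub>v w) $ i = (\<Sum>j\<in>{0..<n}. A $$ (i, j) * w $ j)"
      using A w i by (simp add: scalar_prod_def)
    also have "\<dots> = (\<Sum>j\<in>{0..<n}. F j)"
      using i unfolding A_def w_def F_def by (intro sum.cong) auto
    also have "\<dots> = (\<Sum>j\<in>{0..<Suc k}. F j) + (\<Sum>j\<in>{Suc k..<n}. F j)"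
      using kn by (intro sum.atLeastLessThan_concat[symmetric]) auto
    also have "(\<Sum>j\<in>{Suc k..<n}. F j) = 0" unfolding F_def by (intro sum.neutral) auto
    also have "(\<Sum>j\<in>{0..<Suc k}. F j) = (\<Sum>j\<in>{0..<k}. F j) + F k" by simp
    also have "(\<Sum>j\<in>{0..<k}. F j) = - (\<Sum>j<k. d j * v (Suc j) i)"
      unfolding F_def by (simp add: atLeast0LessThan sum_negf)
    also have "F k = (\<Sum>j<k. d j * v (Suc j) i)" unfolding F_def using H[OF i] by simp
    finally show "(A *\<^sub>v w) $ i = 0\<^sub>v n $ i" using i by simp
  qed
  then have "det A = 0" using det_0_iff_vec_prod_zero[OF A] w wnz by blast
  then show False using det unfolding A_def by simp
qed



definition inspan :: "nat \<Rightarrow> (nat \<Rightarrow> nat \<Rightarrow> real) \<Rightarrow> nat \<Rightarrow> (nat \<Rightarrow> real) \<Rightarrow> bool" where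
  "inspan n v k x \<longleftrightarrow> (\<exists>c. \<forall>i<n. x i = (\<Sum>j<k. c j * v (Suc j) i))"

lemma gs_len: "length (gs_list n v k) = k"
  by (induction k) (simp_all add: Let_def)

lemma gs_last: "gs_list n v (Suc k) ! k =
   (let u = (\<lambda>i. v (Suc k) i - (\<Sum>e\<leftarrow>gs_list n v k. ipn n (v (Suc k)) e * e i))
    in (\<lambda>i. u i / sqrt (ipn n u u)))"
  by (simp add: Let_def nth_append gs_len)

lemma gs_prefix: "q < k \<Longrightarrow> gs_list n v (Suc k) ! q = gs_list n v k ! q"
  by (simp add: Let_def nth_append gs_len)

lemma sum_list_map_nth: "sum_list (map F xs) = (\<Sum>q<length xs. F (xs ! q))"
  by (simp add: sum_list_sum_nth atLeast0LessThan)

lemma inspan_Suc: "inspan n v k x \<Longrightarrow> inspan n v (Suc k) x"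
proof -
  assume "inspan n v k x"
  then obtain c where c: "\<forall>i<n. x i = (\<Sum>j<k. c j * v (Suc j) i)" unfolding inspan_def by blast
  have "\<forall>i<n. x i = (\<Sum>j<Suc k. (c(k := 0)) j * v (Suc j) i)"
    using c by simp
  then show ?thesis unfolding inspan_def by blast
qed

lemma comb_span:
  assumes len: "length es = k" and sp: "\<forall>q<k. inspan n v k (es ! q)"
  shows "\<exists>d. \<forall>i<n. (\<Sum>e\<leftarrow>es. a e * e i) = (\<Sum>j<k. d j * v (Suc j) i)"
proof -
  have "\<forall>q. \<exists>c. q < k \<longrightarrow> (\<forall>i<n. (es ! q) i = (\<Sum>j<k. c j * v (Suc j) i))"
    using sp unfolding inspan_def by blast
  then obtain C where C: "\<And>q i. q < k \<Longrightarrow> i < n \<Longrightarrow> (es ! q) i = (\<Sum>j<k. C q j * v (Suc j) i)"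
    by metis
  define d where "d j = (\<Sum>q<k. a (es ! q) * C q j)" for j
  have "(\<Sum>e\<leftarrow>es. a e * e i) = (\<Sum>j<k. d j * v (Suc j) i)" if i: "i < n" for i
  proof -
    have "(\<Sum>e\<leftarrow>es. a e * e i) = (\<Sum>q<k. a (es ! q) * (es ! q) i)"
      by (simp add: sum_list_map_nth len)
    also have "\<dots> = (\<Sum>q<k. a (es ! q) * (\<Sum>j<k. C q j * v (Suc j) i))"
      using C i by (intro sum.cong) auto
    also have "\<dots> = (\<Sum>q<k. \<Sum>j<k. a (es ! q) * C q j * v (Suc j) i)"
      by (simp add: sum_distrib_left mult.assoc)
    also have "\<dots> = (\<Sum>j<k. \<Sum>q<k. a (es ! q) * C q j * v (Suc j) i)"
      by (rule sum.swap)
    also have "\<dots> = (\<Sum>j<k. d j * v (Suc j) i)"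
      unfolding d_def by (simp add: sum_distrib_right)
    finally show ?thesis .
  qed
  then show ?thesis by blast
qed

lemma gs_span: "q < k \<Longrightarrow> inspan n v k (gs_list n v k ! q)"
proof (induction k arbitrary: q)
  case 0 then show ?case by simp
next
  case (Suc k)
  show ?case
  proof (cases "q < k")
    case True
    then show ?thesis using Suc.IH[OF True] gs_prefix[OF True] inspan_Suc by metis
  next
    case False
    then have q: "q = k" using Suc.prems by simp
    obtain d where d: "\<forall>i<n. (\<Sum>e\<leftarrow>gs_list n v k. ipn n (v (Suc k)) e * e i) = (\<Sum>j<k. d j * v (Suc j) i)"
      using comb_span[OF gs_len, where a="\<lambda>e. ipn n (v (Suc k)) e"] Suc.IH by blast
    define u where "u = (\<lambda>i. v (Suc k) i - (\<Sum>e\<leftarrow>gs_list n v k. ipn n (v (Suc k)) e * e i))"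
    define s where "s = sqrt (ipn n u u)"
    have e: "gs_list n v (Suc k) ! q = (\<lambda>i. u i / s)" unfolding q gs_last u_def s_def by (simp add: Let_def)
    define c where "c j = (if j < k then - d j / s else 1 / s)" for j
    have "u i / s = (\<Sum>j<Suc k. c j * v (Suc j) i)" if i: "i < n" for i
    proof -
      have "u i / s = v (Suc k) i / s - (\<Sum>j<k. d j * v (Suc j) i) / s"
        unfolding u_def using d i by (simp add: diff_divide_distrib)
      also have "\<dots> = (\<Sum>j<k. c j * v (Suc j) i) + c k * v (Suc k) i"
        unfolding c_def by (simp add: sum_divide_distrib sum_negf)
      finally show ?thesis by simp
    qed
    then show ?thesis unfolding e inspan_def by blast
  qed
qed




definition sm :: "real set \<Rightarrow> (real \<Rightarrow> real) \<Rightarrow> bool" where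
  "sm U g \<longleftrightarrow> (\<forall>k. ksm k U g)"

lemma sm_iff: "smooth_on_real U g \<longleftrightarrow> sm U g"
  unfolding smooth_on_real_def sm_def ksm_def by blast

lemma sm_const: "sm U (\<lambda>_. c)" unfolding sm_def using ksm_const by blast
lemma sm_id: "sm U (\<lambda>x. x)" unfolding sm_def using ksm_id by blast
lemma sm_add: "open U \<Longrightarrow> sm U g \<Longrightarrow> sm U h \<Longrightarrow> sm U (\<lambda>x. g x + h x)"
  unfolding sm_def using ksm_add by blast
lemma sm_mult: "open U \<Longrightarrow> sm U g \<Longrightarrow> sm U h \<Longrightarrow> sm U (\<lambda>x. g x * h x)"
  unfolding sm_def using ksm_mult by blast
lemma sm_diff: "open U \<Longrightarrow> sm U g \<Longrightarrow> sm U h \<Longrightarrow> sm U (\<lambda>x. g x - h x)"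
proof -
  assume a: "open U" "sm U g" "sm U h"
  have "sm U (\<lambda>x. g x + (- 1) * h x)" by (rule sm_add[OF a(1,2) sm_mult[OF a(1) sm_const a(3)]])
  then show ?thesis by simp
qed
lemma sm_chain: "open U \<Longrightarrow> open V \<Longrightarrow> sm V \<phi> \<Longrightarrow> sm U g \<Longrightarrow> (\<And>t. t \<in> U \<Longrightarrow> g t \<in> V) \<Longrightarrow>
   sm U (\<lambda>x. \<phi> (g x))"
  unfolding sm_def using ksm_chain by blast
lemma sm_divide: "open U \<Longrightarrow> sm U g \<Longrightarrow> sm U h \<Longrightarrow> (\<And>t. t \<in> U \<Longrightarrow> h t \<noteq> 0) \<Longrightarrow> sm U (\<lambda>x. g x / h x)"
proof -
  assume a: "open U" "sm U g" "sm U h" "\<And>t. t \<in> U \<Longrightarrow> h t \<noteq> 0"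
  have "sm {x. x \<noteq> 0} inverse" unfolding sm_def using ksm_inverse by blast
  then have "sm U (\<lambda>x. inverse (h x))" using sm_chain[OF a(1) open_nonzero _ a(3)] a(4) by blast
  then have "sm U (\<lambda>x. g x * inverse (h x))" by (rule sm_mult[OF a(1,2)])
  then show ?thesis by (simp add: divide_inverse)
qed
lemma sm_sqrt: "open U \<Longrightarrow> sm U g \<Longrightarrow> (\<And>t. t \<in> U \<Longrightarrow> g t > 0) \<Longrightarrow> sm U (\<lambda>x. sqrt (g x))"
proof -
  assume a: "open U" "sm U g" "\<And>t. t \<in> U \<Longrightarrow> g t > 0"
  have "sm {0<..} sqrt" unfolding sm_def using ksm_sqrt by blast
  then show ?thesis using sm_chain[OF a(1) open_greaterThan _ a(2)] a(3) by simp
qed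
lemma sm_sum: "finite A \<Longrightarrow> open U \<Longrightarrow> (\<And>a. a \<in> A \<Longrightarrow> sm U (g a)) \<Longrightarrow> sm U (\<lambda>x. \<Sum>a\<in>A. g a x)"
proof (induction A rule: finite_induct)
  case empty then show ?case using sm_const[of U 0] by simp
next
  case (insert a A)
  have "sm U (\<lambda>x. g a x + (\<Sum>a\<in>A. g a x))"
    using insert by (intro sm_add) auto
  then show ?case using insert by simp
qed

lemma deriv_funpow_add: "(deriv ^^ i) ((deriv ^^ j) g) = (deriv ^^ (i + j)) g"
  by (simp add: funpow_add)

lemma sm_derivs: "sm U g \<Longrightarrow> sm U ((deriv ^^ j) g)"
  unfolding sm_def ksm_def deriv_funpow_add
  by (meson add_le_mono order_refl)

lemma sm_diffI: "sm U g \<Longrightarrow> t \<in> U \<Longrightarrow> g differentiable (at t)"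
  unfolding sm_def using ksm_diffI by blast




lemma ipn_pos:
  assumes "i0 < n" "u i0 \<noteq> 0"
  shows "ipn n u u > 0"
  unfolding ipn_def using assms by (intro sum_pos2[of "{..<n}" i0]) (auto simp: zero_less_mult_iff)

lemma gs_u_nonzero:
  fixes v :: "nat \<Rightarrow> nat \<Rightarrow> real"
  assumes det: "det (mat n n (\<lambda>(i, j). v (j + 1) i)) \<noteq> 0" and kn: "k < n"
  shows "\<exists>i<n. v (Suc k) i - (\<Sum>e\<leftarrow>gs_list n v k. a e * e i) \<noteq> 0"
proof -
  obtain d where d: "\<forall>i<n. (\<Sum>e\<leftarrow>gs_list n v k. a e * e i) = (\<Sum>j<k. d j * v (Suc j) i)"
    using comb_span[OF gs_len, where a=a] gs_span by blast
  obtain i where "i < n" "v (Suc k) i \<noteq> (\<Sum>j<k. d j * v (Suc j) i)"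
    using det_indep[OF det kn] by blast
  then show ?thesis using d by auto
qed

lemma sm_ipn: "open U \<Longrightarrow> (\<And>i. i < n \<Longrightarrow> sm U (\<lambda>t. a t i)) \<Longrightarrow> (\<And>i. i < n \<Longrightarrow> sm U (\<lambda>t. b t i)) \<Longrightarrow>
  sm U (\<lambda>t. ipn n (a t) (b t))"
  unfolding ipn_def by (intro sm_sum sm_mult) auto

lemma gs_smooth:
  fixes v :: "real \<Rightarrow> nat \<Rightarrow> nat \<Rightarrow> real"
  assumes U: "open U" and vs: "\<And>j i. i < n \<Longrightarrow> sm U (\<lambda>t. v t j i)"
    and det: "\<And>t. t \<in> U \<Longrightarrow> det (mat n n (\<lambda>(i, j). v t (j + 1) i)) \<noteq> 0"
  shows "k \<le> n \<Longrightarrow> q < k \<Longrightarrow> i < n \<Longrightarrow> sm U (\<lambda>t. (gs_list n (v t) k ! q) i)"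
proof (induction k arbitrary: q i)
  case 0 then show ?case by simp
next
  case (Suc k)
  show ?case
  proof (cases "q < k")
    case True
    then show ?thesis using Suc.IH[OF _ True Suc.prems(3)] Suc.prems(1) gs_prefix[OF True] by simp
  next
    case False
    then have q: "q = k" using Suc.prems by simp
    have kn: "k < n" using Suc.prems by simp
    define u where "u t = (\<lambda>i. v t (Suc k) i - (\<Sum>e\<leftarrow>gs_list n (v t) k. ipn n (v t (Suc k)) e * e i))" for t
    have e: "(gs_list n (v t) (Suc k) ! q) i = u t i / sqrt (ipn n (u t) (u t))" for t
      unfolding q gs_last u_def by (simp add: Let_def)
    have u2: "u t i = v t (Suc k) i - (\<Sum>q<k. ipn n (v t (Suc k)) (gs_list n (v t) k ! q) * (gs_list n (v t) k ! q) i)" for t i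
      unfolding u_def by (simp add: sum_list_map_nth gs_len)
    have ih: "sm U (\<lambda>t. (gs_list n (v t) k ! q) i)" if "q < k" "i < n" for q i
      using Suc.IH[OF _ that] Suc.prems(1) by simp
    have us: "sm U (\<lambda>t. u t i)" if i: "i < n" for i
      unfolding u2
      by (intro sm_diff[OF U] sm_sum[OF _ U] sm_mult[OF U] sm_ipn[OF U] vs i ih) auto
    have pos: "ipn n (u t) (u t) > 0" if t: "t \<in> U" for t
    proof -
      obtain i0 where "i0 < n" "u t i0 \<noteq> 0"
        using gs_u_nonzero[OF det[OF t] kn, where a="\<lambda>e. ipn n (v t (Suc k)) e"] unfolding u_def by auto
      then show ?thesis by (rule ipn_pos)
    qed
    have ss: "sm U (\<lambda>t. sqrt (ipn n (u t) (u t)))"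
      by (rule sm_sqrt[OF U sm_ipn[OF U us us] pos])
    have "sm U (\<lambda>t. u t i / sqrt (ipn n (u t) (u t)))"
      by (rule sm_divide[OF U us[OF Suc.prems(3)] ss]) (use pos in fastforce)
    then show ?thesis unfolding e .
  qed
qed




lemma term_bound:
  fixes s a b m R M \<delta> :: real
  assumes "\<bar>s\<bar> \<le> R" "\<bar>a - b\<bar> \<le> M * \<delta>" "R * \<delta> \<le> 1/2" "\<bar>s - m\<bar> \<le> 1/2" "\<bar>b\<bar> \<le> M" "M \<ge> 0"
  shows "\<bar>s * a - m * b\<bar> \<le> M"
proof -
  have e: "s * a - m * b = s * (a - b) + (s - m) * b" by (simp add: algebra_simps)
  have "\<bar>s * (a - b)\<bar> \<le> R * (M * \<delta>)"
    unfolding abs_mult using assms(1,2) by (intro mult_mono) auto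
  also have "\<dots> = M * (R * \<delta>)" by simp
  also have "\<dots> \<le> M * (1/2)" using assms(3,6) by (intro mult_left_mono) auto
  finally have 1: "\<bar>s * (a - b)\<bar> \<le> M / 2" by simp
  have "\<bar>(s - m) * b\<bar> \<le> 1/2 * M"
    unfolding abs_mult using assms(4,5) by (intro mult_mono) auto
  then have 2: "\<bar>(s - m) * b\<bar> \<le> M / 2" by simp
  have "\<bar>s * a - m * b\<bar> \<le> \<bar>s * (a - b)\<bar> + \<bar>(s - m) * b\<bar>" unfolding e by (rule abs_triangle_ineq)
  then show ?thesis using 1 2 by simp
qed

lemma comp_le_norm:
  fixes a :: "nat \<Rightarrow> real"
  assumes "sqrt (\<Sum>i<n. (a i)\<^sup>2) < \<sigma>" "i < n"
  shows "\<bar>a i\<bar> < \<sigma>"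
proof -
  have "(a i)\<^sup>2 \<le> (\<Sum>i<n. (a i)\<^sup>2)" using assms(2) by (intro member_le_sum) auto
  then have "sqrt ((a i)\<^sup>2) \<le> sqrt (\<Sum>i<n. (a i)\<^sup>2)" by (rule real_sqrt_le_mono)
  then show ?thesis using assms(1) by simp
qed

lemma count_main:
  fixes g :: "nat \<Rightarrow> nat \<Rightarrow> real \<Rightarrow> real" and n :: nat and M \<sigma> :: real
  assumes n: "n \<ge> 2" and M: "M \<ge> 0"
    and bd: "\<And>r i t. r < n - 1 \<Longrightarrow> i < n \<Longrightarrow> t \<in> {-2..2} \<Longrightarrow> \<bar>g r i t\<bar> \<le> M"
    and lip: "\<And>r i t t'. r < n - 1 \<Longrightarrow> i < n \<Longrightarrow> t \<in> {-2..2} \<Longrightarrow> t' \<in> {-2..2} \<Longrightarrow>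
                 \<bar>g r i t - g r i t'\<bar> \<le> M * \<bar>t - t'\<bar>"
    and \<sigma>: "\<sigma> \<ge> 1"
  shows "\<exists>C. \<forall>T R. (\<forall>r<n-1. \<sigma> \<le> T r \<and> T r \<le> R) \<longrightarrow>
     finite {z. (\<forall>i\<ge>n. z i = 0) \<and> (\<exists>x\<in>{x. \<exists>t\<in>{-2..2}. \<exists>s. (\<forall>r<n-1. \<bar>s r\<bar> \<le> T r) \<and>
                  x = (\<lambda>i. \<Sum>r<n-1. s r * g r i t)}. sqrt (\<Sum>i<n. (real_of_int (z i) - x i)\<^sup>2) < \<sigma>)} \<and>
     real (card {z. (\<forall>i\<ge>n. z i = 0) \<and> (\<exists>x\<in>{x. \<exists>t\<in>{-2..2}. \<exists>s. (\<forall>r<n-1. \<bar>s r\<bar> \<le> T r) \<and>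
                  x = (\<lambda>i. \<Sum>r<n-1. s r * g r i t)}. sqrt (\<Sum>i<n. (real_of_int (z i) - x i)\<^sup>2) < \<sigma>)})
       \<le> C * R * (\<Prod>r<n-1. T r)"
proof -
  define K :: int where "K = \<lceil>\<sigma> + real n * M + 1\<rceil>"
  have "0 \<le> \<sigma> + real n * M + 1" using M \<sigma> by simp
  moreover have "real_of_int K \<ge> \<sigma> + real n * M + 1" unfolding K_def by (rule le_of_int_ceiling)
  ultimately have "real_of_int K \<ge> 0" by linarith
  then have K0: "K \<ge> 0" by simp
  define C :: real where "C = 6 * 5 ^ (n - 1) * (real_of_int (2 * K + 1)) ^ n"
  show ?thesis
  proof (intro exI[of _ C] allI impI)
    fix T :: "nat \<Rightarrow> real" and R :: real
    assume hyp: "\<forall>r<n-1. \<sigma> \<le> T r \<and> T r \<le> R"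
    define L where "L = {z. (\<forall>i\<ge>n. z i = 0) \<and> (\<exists>x\<in>{x. \<exists>t\<in>{-2..2}. \<exists>s. (\<forall>r<n-1. \<bar>s r\<bar> \<le> T r) \<and>
                  x = (\<lambda>i. \<Sum>r<n-1. s r * g r i t)}. sqrt (\<Sum>i<n. (real_of_int (z i) - x i)\<^sup>2) < \<sigma>)}"
    have T1: "T r \<ge> 1" "T r \<le> R" if "r < n - 1" for r using hyp that \<sigma> by auto
    have R1: "R \<ge> 1" using T1[of 0] n by auto
    define N :: nat where "N = nat \<lceil>4 * R\<rceil>"
    have N1: "real N \<ge> 4 * R" "real N \<le> 4 * R + 1" unfolding N_def using R1
      by (simp_all add: of_nat_nat)
    have Npos: "real N > 0" using N1 R1 by linarith
    define h where "h = 4 / real N"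
    have h0: "h > 0" unfolding h_def using Npos by simp
    have Nh: "real N * h = 4" unfolding h_def using Npos by simp
    have hR: "R * h \<le> 1"
    proof -
      have "R * h = R * 4 / real N" unfolding h_def by simp
      also have "\<dots> \<le> 1" using N1 Npos by (simp add: divide_le_eq)
      finally show ?thesis .
    qed
    define tk where "tk k = -2 + real k * h" for k :: nat
    define cT where "cT r = \<lceil>T r\<rceil>" for r
    define codes where "codes = {0..N} \<times> (PiE {..<n-1} (\<lambda>r. {-cT r..cT r})) \<times> (PiE {..<n} (\<lambda>i. {-K..K}))"
    define dec where "dec = (\<lambda>(k::nat, m::nat\<Rightarrow>int, w::nat\<Rightarrow>int). (\<lambda>i. if i < n then w i + round (\<Sum>r<n-1. real_of_int (m r) * g r i (tk k)) else 0))"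
    have sub: "L \<subseteq> dec ` codes"
    proof
      fix z assume "z \<in> L"
      then obtain x t s where z0: "\<forall>i\<ge>n. z i = 0" and t: "t \<in> {-2..2}" and s: "\<forall>r<n-1. \<bar>s r\<bar> \<le> T r"
        and x: "x = (\<lambda>i. \<Sum>r<n-1. s r * g r i t)" and d: "sqrt (\<Sum>i<n. (real_of_int (z i) - x i)\<^sup>2) < \<sigma>"
        unfolding L_def by blast
      define y where "y = (t + 2) / h"
      have ty: "t + 2 = y * h" unfolding y_def using h0 by simp
      have y0: "0 \<le> y" unfolding y_def using t h0 by simp
      have yN: "y \<le> real N"
      proof -
        have "y * h \<le> real N * h" using ty Nh t by simp
        then show ?thesis using h0 by simp
      qed
      define k where "k = nat (round y)"
      have r0: "round y \<ge> 0" using round_mono[OF y0] by simp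
      have rN: "round y \<le> int N" using round_mono[OF yN] by simp
      have kN: "k \<in> {0..N}" unfolding k_def using rN by simp
      have kr: "real k = real_of_int (round y)" unfolding k_def using r0 by simp
      have tkk: "\<bar>t - tk k\<bar> \<le> h / 2"
      proof -
        have "t - tk k = h * (y - real_of_int (round y))" unfolding tk_def kr using ty by (simp add: algebra_simps)
        then have "\<bar>t - tk k\<bar> = h * \<bar>y - real_of_int (round y)\<bar>" using h0 by (simp add: abs_mult)
        also have "\<dots> \<le> h * (1/2)" using of_int_round_abs_le[of y] h0 by (intro mult_left_mono) (auto simp: abs_minus_commute)
        finally show ?thesis by simp
      qed
      have tk_in: "tk k \<in> {-2..2}"
      proof -
        have "0 \<le> real k * h" using h0 by simp
        moreover have "real k * h \<le> real N * h" using kN h0 by (intro mult_right_mono) auto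
        ultimately show ?thesis unfolding tk_def using Nh by simp
      qed
      define mm where "mm = restrict (\<lambda>r. round (s r)) {..<n-1}"
      have mmP: "mm \<in> PiE {..<n-1} (\<lambda>r. {-cT r..cT r})"
      proof -
        have "round (s r) \<in> {-cT r..cT r}" if r: "r < n - 1" for r
        proof -
          have "round (s r) \<le> \<lceil>s r\<rceil>" by (rule ceiling_ge_round)
          also have "\<dots> \<le> cT r" unfolding cT_def using s r by (intro ceiling_mono) auto
          finally have 1: "round (s r) \<le> cT r" .
          have "- cT r = \<lfloor>- T r\<rfloor>" unfolding cT_def by (simp add: floor_minus)
          also have "\<dots> \<le> \<lfloor>s r\<rfloor>" using s r by (intro floor_mono) auto
          also have "\<dots> \<le> round (s r)" by (rule floor_le_round)
          finally show ?thesis using 1 by simp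
        qed
        then show ?thesis unfolding mm_def by auto
      qed
      define yy where "yy i = (\<Sum>r<n-1. real_of_int (mm r) * g r i (tk k))" for i
      define ww where "ww = restrict (\<lambda>i. z i - round (yy i)) {..<n}"
      have wwP: "ww \<in> PiE {..<n} (\<lambda>i. {-K..K})"
      proof -
        have "z i - round (yy i) \<in> {-K..K}" if i: "i < n" for i
        proof -
          have a1: "\<bar>real_of_int (z i) - x i\<bar> < \<sigma>" by (rule comp_le_norm[OF d i])
          have "x i - yy i = (\<Sum>r<n-1. s r * g r i t - real_of_int (mm r) * g r i (tk k))"
            unfolding x yy_def by (simp add: sum_subtractf)
          also have "\<bar>\<dots>\<bar> \<le> (\<Sum>r<n-1. \<bar>s r * g r i t - real_of_int (mm r) * g r i (tk k)\<bar>)"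
            by (rule sum_abs)
          also have "\<dots> \<le> (\<Sum>r<n-1. M)"
          proof (rule sum_mono)
            fix r assume "r \<in> {..<n-1}"
            then have r: "r < n - 1" by simp
            have mr: "mm r = round (s r)" unfolding mm_def using r by simp
            show "\<bar>s r * g r i t - real_of_int (mm r) * g r i (tk k)\<bar> \<le> M"
            proof (rule term_bound[where R=R and \<delta>="h/2"])
              show "\<bar>s r\<bar> \<le> R" using s r T1[OF r] by force
              have "\<bar>g r i t - g r i (tk k)\<bar> \<le> M * \<bar>t - tk k\<bar>" by (rule lip[OF r i t tk_in])
              also have "\<dots> \<le> M * (h / 2)" using tkk M by (intro mult_left_mono) auto
              finally show "\<bar>g r i t - g r i (tk k)\<bar> \<le> M * (h / 2)" .
              show "R * (h / 2) \<le> 1 / 2" using hR by simp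
              show "\<bar>s r - real_of_int (mm r)\<bar> \<le> 1 / 2" unfolding mr using of_int_round_abs_le[of "s r"] by (simp add: abs_minus_commute)
              show "\<bar>g r i (tk k)\<bar> \<le> M" by (rule bd[OF r i tk_in])
              show "M \<ge> 0" by (rule M)
            qed
          qed
          also have "\<dots> = real (n - 1) * M" by simp
          also have "\<dots> \<le> real n * M" using M by (intro mult_right_mono) auto
          finally have a2: "\<bar>x i - yy i\<bar> \<le> real n * M" .
          have a3: "\<bar>yy i - real_of_int (round (yy i))\<bar> \<le> 1/2" using of_int_round_abs_le[of "yy i"] by (simp add: abs_minus_commute)
          have "\<bar>real_of_int (z i - round (yy i))\<bar> \<le> \<sigma> + real n * M + 1"
            using a1 a2 a3 unfolding abs_le_iff abs_less_iff of_int_diff by linarith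
          also have "\<dots> \<le> real_of_int K" unfolding K_def by simp
          finally have "\<bar>z i - round (yy i)\<bar> \<le> K" by linarith
          then show ?thesis by (cases "z i - round (yy i) \<ge> 0") auto
        qed
        then show ?thesis unfolding ww_def by auto
      qed
      have "dec (k, mm, ww) = z"
      proof
        fix i show "dec (k, mm, ww) i = z i"
          using z0 unfolding dec_def ww_def yy_def by auto
      qed
      moreover have "(k, mm, ww) \<in> codes" unfolding codes_def using kN mmP wwP by simp
      ultimately show "z \<in> dec ` codes" by force
    qed
    have fin: "finite codes" unfolding codes_def by (intro finite_cartesian_product finite_PiE) auto
    have finL: "finite L" using sub fin finite_surj by blast
    have "card L \<le> card (dec ` codes)" by (rule card_mono[OF finite_imageI[OF fin] sub])
    also have "\<dots> \<le> card codes" by (rule card_image_le[OF fin])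
    also have "card codes = Suc N * ((\<Prod>r<n-1. nat (2 * cT r + 1)) * (\<Prod>i<n. nat (2 * K + 1)))"
      unfolding codes_def card_cartesian_product by (simp add: card_PiE)
    finally have cc: "card L \<le> Suc N * ((\<Prod>r<n-1. nat (2 * cT r + 1)) * (\<Prod>i<n. nat (2 * K + 1)))" .
    have "real (card L) \<le> real (Suc N * ((\<Prod>r<n-1. nat (2 * cT r + 1)) * (\<Prod>i<n. nat (2 * K + 1))))"
      using cc by (simp only: of_nat_le_iff)
    also have "\<dots> = real (Suc N) * ((\<Prod>r<n-1. real (nat (2 * cT r + 1))) * (real (nat (2 * K + 1))) ^ n)"
      by (simp only: of_nat_mult of_nat_prod prod_constant card_lessThan of_nat_power)
    finally have cardL: "real (card L) \<le> real (Suc N) * ((\<Prod>r<n-1. real (nat (2 * cT r + 1))) * (real (nat (2 * K + 1))) ^ n)" .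
    have P1: "(\<Prod>r<n-1. real (nat (2 * cT r + 1))) \<le> (\<Prod>r<n-1. 5 * T r)"
    proof (rule prod_mono)
      fix r assume "r \<in> {..<n-1}"
      then have r: "r < n - 1" by simp
      have c1: "cT r \<ge> 1" unfolding cT_def using T1[OF r] by simp
      have c2: "real_of_int (cT r) \<le> T r + 1" unfolding cT_def by linarith
      have "real (nat (2 * cT r + 1)) = real_of_int (2 * cT r + 1)" using c1 by simp
      then show "0 \<le> real (nat (2 * cT r + 1)) \<and> real (nat (2 * cT r + 1)) \<le> 5 * T r"
        using c2 T1[OF r] by simp
    qed
    have P2: "(\<Prod>r<n-1. 5 * T r) = 5 ^ (n - 1) * (\<Prod>r<n-1. T r)" by (simp add: prod.distrib)
    have Tpos: "(\<Prod>r<n-1. T r) \<ge> 0" using T1 by (intro prod_nonneg) (fastforce)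
    have SN: "real (Suc N) \<le> 6 * R" using N1 R1 by simp
    have KK: "real (nat (2 * K + 1)) = real_of_int (2 * K + 1)" using K0 by simp
    have "real (card L) \<le> real (Suc N) * ((\<Prod>r<n-1. real (nat (2 * cT r + 1))) * (real (nat (2 * K + 1))) ^ n)"
      by (rule cardL)
    also have "\<dots> \<le> (6 * R) * ((5 ^ (n - 1) * (\<Prod>r<n-1. T r)) * (real (nat (2 * K + 1))) ^ n)"
      using SN P1 P2 Tpos by (intro mult_mono prod_nonneg) (auto intro!: mult_nonneg_nonneg prod_nonneg)
    also have "\<dots> = C * R * (\<Prod>r<n-1. T r)" unfolding C_def KK by (simp add: algebra_simps)
    finally show "finite L \<and> real (card L) \<le> C * R * (\<Prod>r<n-1. T r)" using finL by simp
  qed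
qed



lemma fin_bound:
  fixes h :: "nat \<Rightarrow> nat \<Rightarrow> real \<Rightarrow> real"
  assumes "\<And>r i. r < n \<Longrightarrow> i < n \<Longrightarrow> \<exists>B. \<forall>t\<in>S. \<bar>h r i t\<bar> \<le> B"
  shows "\<exists>M\<ge>0. \<forall>r<n. \<forall>i<n. \<forall>t\<in>S. \<bar>h r i t\<bar> \<le> M"
proof -
  have "\<forall>p. \<exists>B. fst p < n \<longrightarrow> snd p < n \<longrightarrow> (\<forall>t\<in>S. \<bar>h (fst p) (snd p) t\<bar> \<le> B)"
    using assms by blast
  from choice[OF this] obtain Bp where Bp: "\<forall>p. fst p < n \<longrightarrow> snd p < n \<longrightarrow> (\<forall>t\<in>S. \<bar>h (fst p) (snd p) t\<bar> \<le> Bp p)"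
    by blast
  define M where "M = (\<Sum>r<n. \<Sum>i<n. \<bar>Bp (r, i)\<bar>)"
  have "\<bar>h r i t\<bar> \<le> M" if "r < n" "i < n" "t \<in> S" for r i t
  proof -
    have "\<bar>h r i t\<bar> \<le> Bp (r, i)" using Bp[rule_format, of "(r, i)"] that by simp
    also have "\<dots> \<le> \<bar>Bp (r, i)\<bar>" by simp
    also have "\<dots> \<le> (\<Sum>i<n. \<bar>Bp (r, i)\<bar>)" using that by (intro member_le_sum) auto
    also have "\<dots> \<le> M" unfolding M_def using that by (intro member_le_sum sum_nonneg) auto
    finally show ?thesis .
  qed
  moreover have "M \<ge> 0" unfolding M_def by (intro sum_nonneg) auto
  ultimately show ?thesis by blast
qed

lemma mvt_bound:
  fixes g :: "real \<Rightarrow> real"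
  assumes "a < b" "\<And>x. a \<le> x \<Longrightarrow> x \<le> b \<Longrightarrow> g differentiable (at x)"
    and "\<And>x. a \<le> x \<Longrightarrow> x \<le> b \<Longrightarrow> \<bar>deriv g x\<bar> \<le> B"
  shows "\<bar>g b - g a\<bar> \<le> B * \<bar>b - a\<bar>"
proof -
  have "\<And>x. a \<le> x \<Longrightarrow> x \<le> b \<Longrightarrow> (g has_real_derivative deriv g x) (at x)"
    using assms(2) by (simp only: DERIV_deriv_iff_real_differentiable)
  from MVT2[OF assms(1) this] obtain z where z: "a < z" "z < b" "g b - g a = (b - a) * deriv g z" by blast
  have "\<bar>g b - g a\<bar> = \<bar>b - a\<bar> * \<bar>deriv g z\<bar>" using z(3) by (simp add: abs_mult)
  also have "\<dots> \<le> \<bar>b - a\<bar> * B" using assms(3)[of z] z by (intro mult_left_mono) auto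
  finally show ?thesis by (simp add: mult.commute)
qed

lemma lip_interval:
  fixes g :: "real \<Rightarrow> real"
  assumes "\<And>x. x \<in> {-2..2} \<Longrightarrow> g differentiable (at x)"
    and "\<And>x. x \<in> {-2..2} \<Longrightarrow> \<bar>deriv g x\<bar> \<le> B"
    and t: "t \<in> {-2..2}" and t': "t' \<in> {-2..2}"
  shows "\<bar>g t - g t'\<bar> \<le> B * \<bar>t - t'\<bar>"
proof (cases t t' rule: linorder_cases)
  case less
  have "\<bar>g t' - g t\<bar> \<le> B * \<bar>t' - t\<bar>"
    using t t' by (intro mvt_bound less assms) auto
  then show ?thesis by (simp add: abs_minus_commute)
next
  case equal then show ?thesis using assms(2)[OF t] by simp
next
  case greater
  show ?thesis using t t' by (intro mvt_bound greater assms) auto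
qed

lemma cont_bound:
  fixes g :: "real \<Rightarrow> real"
  assumes "\<And>x. x \<in> {-2..2} \<Longrightarrow> g differentiable (at x)"
  shows "\<exists>B. \<forall>t\<in>{-2..2}. \<bar>g t\<bar> \<le> B"
proof -
  have "isCont g x" if "x \<in> {-2..2}" for x
  proof -
    have "(g has_real_derivative deriv g x) (at x)"
      using assms[OF that] by (simp only: DERIV_deriv_iff_real_differentiable)
    then show ?thesis by (rule DERIV_isCont)
  qed
  then have "continuous_on {-2..2} g" by (intro continuous_at_imp_continuous_on) blast
  from continuous_on_compact_bound[OF compact_Icc this] obtain B where "\<And>x. x \<in> {-2..2} \<Longrightarrow> norm (g x) \<le> B" by blast
  then have "\<forall>t\<in>{-2..2}. \<bar>g t\<bar> \<le> B" by simp
  then show ?thesis by (rule exI)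
qed



theorem corollary4p2:
  fixes n :: nat and U :: "real set" and f :: "nat \<Rightarrow> real \<Rightarrow> real"
  assumes "n \<ge> 3"
    and "open U" and "{-2..2} \<subseteq> U"
    and "\<And>i. 1 \<le> i \<Longrightarrow> i < n \<Longrightarrow> smooth_on_real U (f i)"
    and "\<And>t. t \<in> U \<Longrightarrow> det (mat n n (\<lambda>(i, j). vder (j + 1) (gam f) t i)) \<noteq> 0"
    and "\<And>t. t \<in> U \<Longrightarrow> frenet n f t n (n - 1) \<noteq> 0"
  shows "\<forall>\<sigma>\<ge>1. \<exists>C. \<forall>T R. (\<forall>r<n-1. \<sigma> \<le> T r \<and> T r \<le> R) \<longrightarrow>
            finite (LT n f \<sigma> T) \<and>
            real (card (LT n f \<sigma> T)) \<le> C * R * (\<Prod>r<n-1. T r)"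
proof -
  note U = assms(2)
  define v where "v t = (\<lambda>j. vder j (gam f) t)" for t
  have gams: "sm U (\<lambda>s. gam f s i)" if i: "i < n" for i
  proof (cases "i = 0")
    case True
    have "(\<lambda>s. gam f s i) = (\<lambda>s. s)" using True by (simp add: gam_def)
    then show ?thesis using sm_id by simp
  next
    case False
    have "(\<lambda>s. gam f s i) = f i" using False by (simp add: gam_def fun_eq_iff)
    then show ?thesis using assms(4)[of i] i False sm_iff by simp
  qed
  have vs: "sm U (\<lambda>t. v t j i)" if i: "i < n" for j i
  proof -
    have "(\<lambda>t. v t j i) = (deriv ^^ j) (\<lambda>s. gam f s i)" by (simp add: v_def vder_def fun_eq_iff)
    then show ?thesis using sm_derivs[OF gams[OF i]] by simp
  qed
  have det': "det (mat n n (\<lambda>(i, j). v t (j + 1) i)) \<noteq> 0" if "t \<in> U" for t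
    using assms(5)[OF that] by (simp add: v_def)
  have fr: "frenet n f t k = gs_list n (v t) n ! (k - 1)" for t k
    by (simp add: frenet_def v_def)
  have Fs: "sm U (\<lambda>t. frenet n f t n i)" if i: "i < n" for i
    unfolding fr using gs_smooth[OF U vs det', of n "n - 1" i] i assms(1) by simp
  have Gs: "sm U (\<lambda>t. Gfun n f t i)" if i: "i < n" for i
    unfolding Gfun_def using assms(1,6) i by (intro sm_divide[OF U] Fs) auto
  define g where "g r i = (deriv ^^ r) (\<lambda>s. Gfun n f s i)" for r i
  have gv: "vder r (Gfun n f) t i = g r i t" for r i t by (simp add: g_def vder_def)
  have gsm: "sm U (g r i)" if "i < n" for r i unfolding g_def by (rule sm_derivs[OF Gs[OF that]])
  have gdiff: "g r i differentiable (at t)" if "i < n" "t \<in> {-2..2}" for r i t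
    using sm_diffI[OF gsm[OF that(1)]] that(2) assms(3) by blast
  obtain M where M: "M \<ge> 0" and Mb: "\<forall>r<n. \<forall>i<n. \<forall>t\<in>{-2..2}. \<bar>g r i t\<bar> \<le> M"
    using fin_bound[where h=g and n=n and S="{-2..2}"] cont_bound gdiff by metis
  have bd: "\<bar>g r i t\<bar> \<le> M" if "r < n - 1" "i < n" "t \<in> {-2..2}" for r i t
    using Mb that by simp
  have lip: "\<bar>g r i t - g r i t'\<bar> \<le> M * \<bar>t - t'\<bar>"
    if r: "r < n - 1" and i: "i < n" and t: "t \<in> {-2..2}" and t': "t' \<in> {-2..2}" for r i t t'
  proof (rule lip_interval[OF _ _ t t'])
    show "\<And>x. x \<in> {-2..2} \<Longrightarrow> g r i differentiable (at x)" using gdiff[OF i] by blast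
    have "deriv (g r i) = g (Suc r) i" by (simp add: g_def)
    moreover have "Suc r < n" using r by simp
    ultimately show "\<And>x. x \<in> {-2..2} \<Longrightarrow> \<bar>deriv (g r i) x\<bar> \<le> M" using Mb i by simp
  qed
  show ?thesis
  proof (intro allI impI)
    fix \<sigma> :: real assume \<sigma>: "\<sigma> \<ge> 1"
    have n2: "n \<ge> 2" using assms(1) by simp
    show "\<exists>C. \<forall>T R. (\<forall>r<n-1. \<sigma> \<le> T r \<and> T r \<le> R) \<longrightarrow>
            finite (LT n f \<sigma> T) \<and> real (card (LT n f \<sigma> T)) \<le> C * R * (\<Prod>r<n-1. T r)"
      using count_main[OF n2 M bd lip \<sigma>] unfolding LT_def FT_def gv .
  qed
qed


end
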